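(* Let $a<b$ be coprime positive integers with $\alpha=\sqrt{b/a}\notin\mathbb{Q}$. Let $\Gamma\subset\mathbb{Z}^2$ be a full-rank lattice with basis $\mathbf e_1=(\lambda_1,\mu_1)$, $\mathbf e_2=(\lambda_2,\mu_2)$ satisfying $\|\mathbf e_1\|\le2\nu_2$ and $\|\mathbf e_2\|\le2\nu_1$, and let $\theta=-\frac{\lambda_1-\alpha\mu_1}{\lambda_2-\alpha\mu_2}$. Then for all positive integers $u,v$, $$\Big|\frac uv-\alpha\Big|\ge\frac{\Xi(\alpha)}{v^2}\quad\text{and}\quad\Big|\frac uv-\theta\Big|\ge\frac{\xi(\theta)}{v^2},\qquad\text{where } \Xi(\alpha)=(4\sqrt{ab})^{-1},\ \xi(\theta)=(162\,b\det\Gamma)^{-1}.$$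
   Context: $\|(x,y)\|=\max(|x|,|y|)$, and $\nu_1\le\nu_2$ are the successive minima of $\Gamma$ with respect to this norm. *)

theory Defs
  imports Complex_Main
begin

definition lattice_of :: "int \<times> int \<Rightarrow> int \<times> int \<Rightarrow> (int \<times> int) set" where
  "lattice_of e1 e2 =
     {(m * fst e1 + n * fst e2, m * snd e1 + n * snd e2) | m n. True}"

definition det2 :: "int \<times> int \<Rightarrow> int \<times> int \<Rightarrow> int" where
  "det2 x y = fst x * snd y - snd x * fst y"

definition supnorm :: "int \<times> int \<Rightarrow> real" where
  "supnorm x = real_of_int (max \<bar>fst x\<bar> \<bar>snd x\<bar>)"

definition succ_min1 :: "(int \<times> int) set \<Rightarrow> real" where
  "succ_min1 L = Inf {r. \<exists>x\<in>L. x \<noteq> (0,0) \<and> supnorm x \<le> r}"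

definition succ_min2 :: "(int \<times> int) set \<Rightarrow> real" where
  "succ_min2 L = Inf {r. \<exists>x\<in>L. \<exists>y\<in>L. det2 x y \<noteq> 0 \<and> supnorm x \<le> r \<and> supnorm y \<le> r}"

definition lattice_det :: "int \<times> int \<Rightarrow> int \<times> int \<Rightarrow> real" where
  "lattice_det e1 e2 = real_of_int \<bar>det2 e1 e2\<bar>"

end

theory Submission
  imports Defs
begin

lemma irr_helper:
  fixes a b :: nat and p q :: int
  assumes "0 < a" "sqrt (real b / real a) \<notin> \<rat>" "q \<noteq> 0"
  shows "real a * (real_of_int p)^2 - real b * (real_of_int q)^2 \<noteq> 0"
proof
  assume h: "real a * (real_of_int p)^2 - real b * (real_of_int q)^2 = 0"
  have "real b / real a = (real_of_int p / real_of_int q)^2"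
    using h assms(1,3) by (simp add: field_simps power2_eq_square)
  hence "sqrt (real b / real a) = \<bar>real_of_int p / real_of_int q\<bar>" by simp
  moreover have "\<bar>real_of_int p / real_of_int q\<bar> \<in> \<rat>"
    unfolding Rats_abs_iff by (intro Rats_divide Rats_of_int)
  ultimately show False using assms(2) by simp
qed

lemma int_abs_ge1:
  fixes a b :: nat and p q :: int
  assumes "0 < a" "sqrt (real b / real a) \<notin> \<rat>" "(p, q) \<noteq> (0,0)"
  shows "\<bar>real a * (real_of_int p)^2 - real b * (real_of_int q)^2\<bar> \<ge> 1"
proof -
  have ne: "real a * (real_of_int p)^2 - real b * (real_of_int q)^2 \<noteq> 0"
  proof (cases "q = 0")
    case True
    then have "p \<noteq> 0" using assms(3) by simp
    then show ?thesis using True assms(1) by simp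
  next
    case False
    then show ?thesis using irr_helper assms by blast
  qed
  have eq: "real a * (real_of_int p)^2 - real b * (real_of_int q)^2
      = real_of_int (int a * p^2 - int b * q^2)" by simp
  have "real_of_int (int a * p^2 - int b * q^2) \<noteq> 0" using ne unfolding eq .
  hence z: "int a * p^2 - int b * q^2 \<noteq> 0" by (metis of_int_0)
  have "\<bar>int a * p^2 - int b * q^2\<bar> \<ge> 1" using z by linarith
  hence "real_of_int \<bar>int a * p^2 - int b * q^2\<bar> \<ge> 1" by (metis of_int_1_le_iff)
  thus ?thesis unfolding eq by (metis of_int_abs)
qed

lemma bnd:
  fixes l m N \<alpha> D :: real
  assumes "\<bar>l\<bar> \<le> N" "\<bar>m\<bar> \<le> N" "\<alpha> > 1" "N \<le> 2 * D"
  shows "\<bar>l\<bar> + \<alpha> * \<bar>m\<bar> \<le> 4 * \<alpha> * D"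
proof -
  have N0: "N \<ge> 0" using assms(1) by linarith
  have "\<alpha> * \<bar>m\<bar> \<le> \<alpha> * N" using assms(2,3) by (intro mult_left_mono) auto
  moreover have "1 * N \<le> \<alpha> * N" using assms(3) N0 by (intro mult_right_mono) auto
  moreover have "\<alpha> * N \<le> \<alpha> * (2 * D)" using assms(3,4) by (intro mult_left_mono) auto
  ultimately show ?thesis using assms(1) by (simp add: algebra_simps)
qed

lemma key_ineq:
  fixes A B e f \<alpha> D v a b :: real
  assumes "a \<ge> 1" "\<alpha> > 1" "a * \<alpha>^2 = b" "\<alpha> * a \<le> b" "D \<ge> 1" "v \<ge> 1"
    "A \<ge> 0" "B \<ge> 0" "e \<ge> 0" "f \<ge> 0" "a * A * B \<ge> 1"
    "e * B \<le> 2 * \<alpha> * D * v + f * A" "e \<le> 4 * \<alpha> * D" "f \<le> 4 * \<alpha> * D"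
  shows "A * (162 * b * D * v) \<ge> e"
proof (rule ccontr)
  define K where "K = 162 * b * D * v"
  assume "\<not> A * (162 * b * D * v) \<ge> e"
  hence AK: "A * K < e" unfolding K_def by simp
  have "\<alpha> * a \<ge> 1 * 1" using assms(1,2) by (intro mult_mono) auto
  hence b1: "b \<ge> 1" using assms(4) by linarith
  hence bpos: "b > 0" by linarith
  have Kpos: "K > 0" unfolding K_def using bpos assms(5,6) by simp
  have "0 \<le> A * K" using assms(7) Kpos by simp
  hence epos: "e > 0" using AK by linarith
  have Alt: "A < e / K" using AK Kpos by (simp add: field_simps)
  have "e * 1 \<le> e * (a * A * B)" by (rule mult_left_mono[OF assms(11) assms(9)])
  hence "e \<le> e * (a * A * B)" by simp
  also have "\<dots> = a * A * (e * B)" by (simp add: algebra_simps)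
  also have "\<dots> \<le> a * A * (2 * \<alpha> * D * v + f * A)"
    using assms(12) assms(1,7) by (intro mult_left_mono) auto
  also have "\<dots> = (2 * \<alpha> * D * v * a) * A + (a * f) * (A * A)" by (simp add: algebra_simps)
  also have "\<dots> < (2 * \<alpha> * D * v * a) * (e / K) + (a * f) * ((e/K) * (e/K))"
  proof -
    have c1: "2 * \<alpha> * D * v * a > 0" using assms by simp
    have "A * A \<le> (e/K) * (e/K)" using Alt assms(7) by (intro mult_mono) auto
    hence "(a * f) * (A * A) \<le> (a * f) * ((e/K) * (e/K))"
      using assms(1,10) by (intro mult_left_mono) auto
    moreover have "(2 * \<alpha> * D * v * a) * A < (2 * \<alpha> * D * v * a) * (e / K)"
      by (rule mult_strict_left_mono[OF Alt c1])
    ultimately show ?thesis by linarith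
  qed
  finally have main: "e < (2 * \<alpha> * D * v * a) * (e / K) + (a * f) * ((e/K) * (e/K))" .
  have t1: "(2 * \<alpha> * D * v * a) / K \<le> 2 / 162"
  proof -
    have "(2 * \<alpha> * D * v * a) / K = (2 * (\<alpha> * a)) / (162 * b)"
      unfolding K_def using assms(5,6) bpos by (simp add: field_simps)
    also have "\<dots> \<le> (2 * b) / (162 * b)" using assms(4) bpos
      by (intro divide_right_mono) auto
    also have "\<dots> = 2 / 162" using bpos by simp
    finally show ?thesis .
  qed
  have t2: "a * f * e / (K * K) \<le> 16 / (162 * 162)"
  proof -
    have "f * e \<le> (4 * \<alpha> * D) * (4 * \<alpha> * D)" using assms(2,5,9,10,13,14) by (intro mult_mono) auto
    hence "a * (f * e) \<le> a * ((4 * \<alpha> * D) * (4 * \<alpha> * D))" using assms(1)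
      by (intro mult_left_mono) auto
    hence "a * f * e \<le> a * ((4 * \<alpha> * D) * (4 * \<alpha> * D))" by (simp add: mult.assoc)
    also have "\<dots> = 16 * b * D * D" using assms(3) by (simp add: power2_eq_square algebra_simps)
    finally have "a * f * e / (K * K) \<le> 16 * b * D * D / (K * K)" using Kpos
      by (intro divide_right_mono) auto
    also have "\<dots> = 16 / (162 * 162 * b * v * v)" unfolding K_def using bpos assms(5,6)
      by (simp add: field_simps)
    also have "\<dots> \<le> 16 / (162 * 162)"
    proof -
      have "b * v * v \<ge> 1"
      proof -
        have "v * v \<ge> 1 * 1" using assms(6) by (intro mult_mono) auto
        hence "b * (v * v) \<ge> 1 * 1" using b1 by (intro mult_mono) auto
        thus ?thesis by (simp add: mult.assoc)
      qed
      thus ?thesis by (simp add: divide_simps mult.assoc)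
    qed
    finally show ?thesis .
  qed
  have "e < e * ((2 * \<alpha> * D * v * a) / K) + e * (a * f * e / (K * K))"
    using main by (simp add: field_simps)
  also have "\<dots> \<le> e * (2/162) + e * (16 / (162*162))"
    using t1 t2 epos by (intro add_mono mult_left_mono) auto
  finally show False using epos by linarith
qed


theorem mainTheorem14:
  fixes a b :: nat and l1 m1 l2 m2 :: int
  assumes "0 < a" "a < b" "coprime a b"
    and "sqrt (real b / real a) \<notin> \<rat>"
    and "det2 (l1, m1) (l2, m2) \<noteq> 0"
    and "supnorm (l1, m1) \<le> 2 * succ_min2 (lattice_of (l1, m1) (l2, m2))"
    and "supnorm (l2, m2) \<le> 2 * succ_min1 (lattice_of (l1, m1) (l2, m2))"
  shows "\<forall>u v :: int. 0 < u \<longrightarrow> 0 < v \<longrightarrow>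
      (let \<alpha> = sqrt (real b / real a);
           \<theta> = - (real_of_int l1 - \<alpha> * real_of_int m1) / (real_of_int l2 - \<alpha> * real_of_int m2)
       in \<bar>real_of_int u / real_of_int v - \<alpha>\<bar> \<ge> (1 / (4 * sqrt (real a * real b))) / (real_of_int v)\<^sup>2
        \<and> \<bar>real_of_int u / real_of_int v - \<theta>\<bar> \<ge>
            (1 / (162 * real b * lattice_det (l1, m1) (l2, m2))) / (real_of_int v)\<^sup>2)"
proof (intro allI impI)
  fix u v :: int
  assume u0: "0 < u" and v0: "0 < v"
  define \<alpha> where "\<alpha> = sqrt (real b / real a)"
  define \<delta> where "\<delta> = l1 * m2 - m1 * l2"
  define D where "D = real_of_int \<bar>\<delta>\<bar>"
  have Ddef: "lattice_det (l1, m1) (l2, m2) = D"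
    unfolding lattice_det_def D_def \<delta>_def det2_def by simp
  have d0: "\<delta> \<noteq> 0" using assms(5) unfolding \<delta>_def det2_def by simp
  have D1: "D \<ge> 1" unfolding D_def using d0 by linarith
  have ar: "real a \<ge> 1" using assms(1) by simp
  have abr: "real a < real b" using assms(2) by simp
  have ba1: "real b / real a > 1" using ar abr by simp
  have al1: "\<alpha> > 1" unfolding \<alpha>_def using ba1 by simp
  have alsq: "\<alpha>^2 = real b / real a" unfolding \<alpha>_def using ba1 by simp
  have aal: "real a * \<alpha>^2 = real b" using alsq ar by (simp add: field_simps)
  have aal2: "\<alpha> * real a = sqrt (real a * real b)"
  proof -
    have "(\<alpha> * real a)^2 = real a * real b" using aal by (simp add: power_mult_distrib power2_eq_square algebra_simps)
    moreover have "\<alpha> * real a \<ge> 0" using al1 by simp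
    ultimately have "sqrt (real a * real b) = \<alpha> * real a" by (rule real_sqrt_unique)
    thus ?thesis by (rule sym)
  qed
  have alb: "\<alpha> * real a \<le> real b"
  proof -
    have "real a * real b \<le> real b * real b" using abr by (intro mult_right_mono) auto
    hence "sqrt (real a * real b) \<le> sqrt (real b * real b)" by (rule real_sqrt_le_mono)
    thus ?thesis using aal2 by simp
  qed
  have sab1: "sqrt (real a * real b) \<ge> 1"
  proof -
    have "real a * real b \<ge> 1 * 1" using ar abr by (intro mult_mono) auto
    thus ?thesis by simp
  qed
  have part1: "\<bar>real_of_int u / real_of_int v - \<alpha>\<bar> \<ge> (1 / (4 * sqrt (real a * real b))) / (real_of_int v)\<^sup>2"
  proof -
    define W where "W = \<bar>real_of_int u - real_of_int v * \<alpha>\<bar>"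
    have g1: "\<bar>real a * (real_of_int u)^2 - real b * (real_of_int v)^2\<bar> \<ge> 1"
      using int_abs_ge1[OF assms(1) assms(4), of u v] v0 by simp
    have fac: "real a * (real_of_int u)^2 - real b * (real_of_int v)^2
       = real a * (real_of_int u - real_of_int v * \<alpha>) * (real_of_int u + real_of_int v * \<alpha>)"
      using aal by (simp add: power2_eq_square algebra_simps)
    have vr: "real_of_int v \<ge> 1" using v0 by simp
    have ur: "real_of_int u \<ge> 1" using u0 by simp
    have Wb: "W * real_of_int v \<ge> 1 / (4 * sqrt (real a * real b))"
    proof (cases "real_of_int u \<le> 3 * real_of_int v * \<alpha>")
      case True
      have "real_of_int v * \<alpha> \<ge> 0" using vr al1 by simp
      hence pp: "real_of_int u + real_of_int v * \<alpha> > 0" using ur by linarith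
      have "\<bar>real a * (real_of_int u - real_of_int v * \<alpha>) * (real_of_int u + real_of_int v * \<alpha>)\<bar>
          = real a * W * (real_of_int u + real_of_int v * \<alpha>)"
        unfolding W_def abs_mult using pp by simp
      hence "1 \<le> real a * W * (real_of_int u + real_of_int v * \<alpha>)"
        using g1 unfolding fac by linarith
      also have "\<dots> \<le> real a * W * (4 * real_of_int v * \<alpha>)"
      proof -
        have h: "real_of_int u + real_of_int v * \<alpha> \<le> 4 * real_of_int v * \<alpha>" using True by linarith
        have "real a * W \<ge> 0" unfolding W_def using ar by simp
        thus ?thesis using h by (rule mult_left_mono[rotated])
      qed
      also have "\<dots> = (W * real_of_int v) * (4 * (\<alpha> * real a))"
        by (simp add: algebra_simps)
      also have "\<dots> = (W * real_of_int v) * (4 * sqrt (real a * real b))"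
        unfolding aal2 ..
      finally have "1 \<le> (W * real_of_int v) * (4 * sqrt (real a * real b))" .
      moreover have s4p: "4 * sqrt (real a * real b) > 0" using sab1 by linarith
      ultimately show ?thesis unfolding pos_divide_le_eq[OF s4p] by simp
    next
      case False
      hence "W \<ge> 2 * real_of_int v * \<alpha>" unfolding W_def by linarith
      moreover have "real_of_int v * \<alpha> \<ge> 1 * 1" using vr al1 by (intro mult_mono) auto
      ultimately have "W \<ge> 2" by linarith
      hence "W * real_of_int v \<ge> 2 * 1" using vr by (intro mult_mono) auto
      hence "W * real_of_int v \<ge> 1" by linarith
      moreover have "1 / (4 * sqrt (real a * real b)) \<le> 1"
      proof -
        have s4: "4 * sqrt (real a * real b) \<ge> 1" using sab1 by linarith
        have "1 / (4 * sqrt (real a * real b)) \<le> 1 / 1" using s4 ar abr by (intro divide_left_mono) auto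
        thus ?thesis by simp
      qed
      ultimately show ?thesis by linarith
    qed
    have "\<bar>real_of_int u / real_of_int v - \<alpha>\<bar> = W / real_of_int v"
      unfolding W_def using vr by (simp add: field_simps abs_div)
    also have "\<dots> = (W * real_of_int v) / (real_of_int v)^2" using vr by (simp add: power2_eq_square)
    also have "\<dots> \<ge> (1 / (4 * sqrt (real a * real b))) / (real_of_int v)\<^sup>2"
      using Wb by (intro divide_right_mono) auto
    finally show ?thesis .
  qed
  have nu1: "succ_min1 (lattice_of (l1, m1) (l2, m2)) \<le> D"
  proof -
    have mem: "(\<delta>, 0) \<in> lattice_of (l1, m1) (l2, m2)"
      unfolding lattice_of_def \<delta>_def
      by (rule CollectI, rule exI[of _ m2], rule exI[of _ "- m1"]) (simp add: algebra_simps)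
    have "D \<in> {r. \<exists>x\<in>lattice_of (l1, m1) (l2, m2). x \<noteq> (0,0) \<and> supnorm x \<le> r}"
      using mem d0 unfolding D_def supnorm_def by force
    moreover have "bdd_below {r. \<exists>x\<in>lattice_of (l1, m1) (l2, m2). x \<noteq> (0,0) \<and> supnorm x \<le> r}"
      unfolding bdd_below_def supnorm_def
      by (rule exI[of _ 0]) force
    ultimately show ?thesis unfolding succ_min1_def by (rule cInf_lower)
  qed
  define N2 where "N2 = supnorm (l2, m2)"
  have N2D: "N2 \<le> 2 * D" using assms(7) nu1 unfolding N2_def by linarith
  have l2N: "\<bar>real_of_int l2\<bar> \<le> N2" and m2N: "\<bar>real_of_int m2\<bar> \<le> N2"
    unfolding N2_def supnorm_def by auto
  define E1 where "E1 = real_of_int l1 - \<alpha> * real_of_int m1"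
  define E2 where "E2 = real_of_int l2 - \<alpha> * real_of_int m2"
  define F1 where "F1 = real_of_int l1 + \<alpha> * real_of_int m1"
  define F2 where "F2 = real_of_int l2 + \<alpha> * real_of_int m2"
  define X where "X = real_of_int u * E2 + real_of_int v * E1"
  define Y where "Y = real_of_int u * F2 + real_of_int v * F1"
  define p where "p = u * l2 + v * l1"
  define q where "q = u * m2 + v * m1"
  have pq0: "(p, q) \<noteq> (0, 0)"
  proof
    assume "(p, q) = (0, 0)"
    hence "p = 0" "q = 0" by auto
    moreover have "v * \<delta> = p * m2 - q * l2" unfolding p_def q_def \<delta>_def by (simp add: algebra_simps)
    ultimately have "v * \<delta> = 0" by simp
    thus False using v0 d0 by simp
  qed
  have XY: "real a * (X * Y) = real a * (real_of_int p)^2 - real b * (real_of_int q)^2"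
    unfolding X_def Y_def E1_def E2_def F1_def F2_def p_def q_def using aal[symmetric]
    by (simp add: power2_eq_square algebra_simps)
  have aXY: "real a * \<bar>X\<bar> * \<bar>Y\<bar> \<ge> 1"
  proof -
    have "\<bar>real a * (X * Y)\<bar> \<ge> 1"
      using int_abs_ge1[OF assms(1) assms(4) pq0] unfolding XY[symmetric] .
    thus ?thesis by (simp add: abs_mult mult.assoc)
  qed
  have EY: "E2 * Y - F2 * X = - 2 * \<alpha> * real_of_int \<delta> * real_of_int v"
    unfolding X_def Y_def E1_def E2_def F1_def F2_def \<delta>_def by (simp add: algebra_simps)
  have eB: "\<bar>E2\<bar> * \<bar>Y\<bar> \<le> 2 * \<alpha> * D * real_of_int v + \<bar>F2\<bar> * \<bar>X\<bar>"
  proof -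
    have "\<bar>E2 * Y\<bar> \<le> \<bar>E2 * Y - F2 * X\<bar> + \<bar>F2 * X\<bar>" by linarith
    also have "\<bar>E2 * Y - F2 * X\<bar> = 2 * \<alpha> * D * real_of_int v"
      unfolding EY D_def using al1 v0 by (simp add: abs_mult)
    finally show ?thesis by (simp add: abs_mult)
  qed
  have eb: "\<bar>E2\<bar> \<le> 4 * \<alpha> * D"
  proof -
    have "\<bar>E2\<bar> \<le> \<bar>real_of_int l2\<bar> + \<alpha> * \<bar>real_of_int m2\<bar>" unfolding E2_def
      using abs_triangle_ineq4[of "real_of_int l2" "\<alpha> * real_of_int m2"] al1 by (simp add: abs_mult)
    also have "\<dots> \<le> 4 * \<alpha> * D" by (rule bnd[OF l2N m2N al1 N2D])
    finally show ?thesis .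
  qed
  have fb: "\<bar>F2\<bar> \<le> 4 * \<alpha> * D"
  proof -
    have "\<bar>F2\<bar> \<le> \<bar>real_of_int l2\<bar> + \<alpha> * \<bar>real_of_int m2\<bar>" unfolding F2_def
      using abs_triangle_ineq[of "real_of_int l2" "\<alpha> * real_of_int m2"] al1 by (simp add: abs_mult)
    also have "\<dots> \<le> 4 * \<alpha> * D" by (rule bnd[OF l2N m2N al1 N2D])
    finally show ?thesis .
  qed
  have vr: "real_of_int v \<ge> 1" using v0 by simp
  have K: "\<bar>X\<bar> * (162 * real b * D * real_of_int v) \<ge> \<bar>E2\<bar>"
    by (rule key_ineq[OF ar al1 aal alb D1 vr abs_ge_zero abs_ge_zero abs_ge_zero abs_ge_zero
          aXY eB eb fb])
  have E20: "E2 \<noteq> 0"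
  proof
    assume "E2 = 0"
    have "(l2, m2) \<noteq> (0, 0)" using d0 unfolding \<delta>_def by auto
    from int_abs_ge1[OF assms(1) assms(4) this]
    have "\<bar>real a * (real_of_int l2)^2 - real b * (real_of_int m2)^2\<bar> \<ge> 1" .
    moreover have "real a * (real_of_int l2)^2 - real b * (real_of_int m2)^2 = real a * (E2 * F2)"
      unfolding E2_def F2_def \<alpha>_def[symmetric] using aal[symmetric] by (simp add: power2_eq_square algebra_simps)
    ultimately show False using \<open>E2 = 0\<close> by simp
  qed
  have th: "real_of_int u / real_of_int v - (- E1 / E2) = X / (real_of_int v * E2)"
    unfolding X_def using E20 vr by (simp add: field_simps)
  have part2: "\<bar>real_of_int u / real_of_int v - (- E1 / E2)\<bar> \<ge> (1 / (162 * real b * D)) / (real_of_int v)\<^sup>2"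
  proof -
    have bp: "real b > 0" using abr ar by simp
    have Ep: "\<bar>E2\<bar> > 0" using E20 by simp
    have "(1 / (162 * real b * D)) / (real_of_int v)\<^sup>2
        = \<bar>E2\<bar> / ((162 * real b * D * real_of_int v) * (real_of_int v * \<bar>E2\<bar>))"
      using Ep vr bp D1 by (simp add: field_simps power2_eq_square)
    also have "\<dots> \<le> (\<bar>X\<bar> * (162 * real b * D * real_of_int v)) / ((162 * real b * D * real_of_int v) * (real_of_int v * \<bar>E2\<bar>))"
      using K Ep vr bp D1 by (intro divide_right_mono) auto
    also have "\<dots> = \<bar>X\<bar> / (real_of_int v * \<bar>E2\<bar>)"
      using Ep vr bp D1 by (simp add: field_simps)
    also have "\<dots> = \<bar>real_of_int u / real_of_int v - (- E1 / E2)\<bar>"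
      unfolding th using vr by (simp add: abs_mult)
    finally show ?thesis .
  qed
  show "let \<alpha> = sqrt (real b / real a);
           \<theta> = - (real_of_int l1 - \<alpha> * real_of_int m1) / (real_of_int l2 - \<alpha> * real_of_int m2)
       in \<bar>real_of_int u / real_of_int v - \<alpha>\<bar> \<ge> (1 / (4 * sqrt (real a * real b))) / (real_of_int v)\<^sup>2
        \<and> \<bar>real_of_int u / real_of_int v - \<theta>\<bar> \<ge>
            (1 / (162 * real b * lattice_det (l1, m1) (l2, m2))) / (real_of_int v)\<^sup>2"
    unfolding Let_def \<alpha>_def[symmetric] Ddef using part1 part2 unfolding E1_def E2_def
    by (simp add: minus_divide_left)
qed

end
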